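(* Let $k$ be an algebraically closed field of positive characteristic and $n\geq1$. Then the action of $\mathrm{SO}_{2n+1}(k)$ on $\mathrm{Q}_{2n}(k)$ described in the context is transitive.
   Context: $\mathrm{Q}_{2n}$ is realized as the closed subscheme of $\mathbb{A}^{2n+2}_k$ given by $q_{2n+2}=0$ and $t_{2n+2}=1$, where $q_{2n+2}=\sum_{i=1}^{n+1}x_ix_{n+1+i}$, $t_{2n+2}(x)=x_{n+1}+x_{2n+2}=B(x,1)$ with $B$ the polar bilinear form of $q_{2n+2}$ and $1$ the vector with $x_{n+1}=x_{2n+2}=1$, other coordinates $0$ (this scheme is isomorphic to the hypersurface $\sum_{i=1}^nx_ix_{n+i}=x_{2n+1}(1-x_{2n+1})$ in $\mathbb{A}^{2n+1}_k$). The group $\mathrm{SO}_{2n+1}$ (kernel of the determinant on the orthogonal group scheme $\mathrm{O}_{2n+1}$ of $q_{2n+1}=\sum_{i=1}^nx_ix_{n+i}+x_{2n+1}^2$) acts on $\mathbb{A}^{2n+2}_k$ via the identification of $\mathrm{O}_{2n+1}$ with the stabilizer of $1$ in $\mathrm{GSO}_{2n+2}$ (the subgroup of similitudes of $q_{2n+2}$ generated by scalars and $\mathrm{SO}_{2n+2}$), using the embedding $(x_1,\dots,x_{2n+1})\mapsto(x_1,\dots,x_n,x_{2n+1},x_{n+1},\dots,x_{2n},x_{2n+1})$; this action preserves $q_{2n+2}$ and $t_{2n+2}$, hence $\mathrm{Q}_{2n}$. *)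

theory Defs
  imports "HOL-Computational_Algebra.Polynomial" "Jordan_Normal_Form.DL_Rank"
begin

text \<open>Coordinates x_1,...,x_{2n+2} of A^{2n+2} are indexed 0,...,2n+1.\<close>

definition q2 :: "nat \<Rightarrow> 'k::field vec \<Rightarrow> 'k" where
  "q2 n y = (\<Sum>i<n+1. y $ i * y $ (n + 1 + i))"

definition B2 :: "nat \<Rightarrow> 'k::field vec \<Rightarrow> 'k vec \<Rightarrow> 'k" where
  "B2 n y z = q2 n (y + z) - q2 n y - q2 n z"

definition one_vec :: "nat \<Rightarrow> 'k::field vec" where
  "one_vec n = vec (2*n+2) (\<lambda>i. if i = n \<or> i = 2*n+1 then 1 else 0)"

text \<open>t_{2n+2}(y) = y_{n+1} + y_{2n+2} = B(y,1).\<close>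
definition t2 :: "nat \<Rightarrow> 'k::field vec \<Rightarrow> 'k" where
  "t2 n y = y $ n + y $ (2*n+1)"

definition Q_points :: "nat \<Rightarrow> 'k::field vec set" where
  "Q_points n = {y \<in> carrier_vec (2*n+2). q2 n y = 0 \<and> t2 n y = 1}"

definition O_points :: "nat \<Rightarrow> 'k::field mat set" where
  "O_points n = {h \<in> carrier_mat (2*n+2) (2*n+2).
      \<forall>y \<in> carrier_vec (2*n+2). q2 n (h *\<^sub>v y) = q2 n y}"

text \<open>Dickson invariant of an orthogonal transformation h (over a field):
  rank(1 - h) mod 2.  In characteristic not 2 it corresponds to det h = (-1)^{rank(1-h)}.\<close>
definition dickson :: "nat \<Rightarrow> 'k::field mat \<Rightarrow> nat" where
  "dickson n h = vec_space.rank (2*n+2) (1\<^sub>m (2*n+2) - h) mod 2"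

definition SO_points :: "nat \<Rightarrow> 'k::field mat set" where
  "SO_points n = {h \<in> O_points n. dickson n h = 0}"

text \<open>k-points of GSO_{2n+2}: the group of similitudes generated by the (invertible)
  scalars and SO_{2n+2}; since scalars are central this is {c h}.\<close>
definition GSO_points :: "nat \<Rightarrow> 'k::field mat set" where
  "GSO_points n = {c \<cdot>\<^sub>m h | c h. c \<noteq> 0 \<and> h \<in> SO_points n}"

text \<open>The k-points of O_{2n+1} = SO_{2n+1} (char 2), resp. the image of SO_{2n+1}(k),
  acting on A^{2n+2}: the stabilizer of 1 in GSO_{2n+2}(k).\<close>
definition Stab_one :: "nat \<Rightarrow> 'k::field mat set" where
  "Stab_one n = {h \<in> GSO_points n. h *\<^sub>v one_vec n = one_vec n}"

end

theory Submission imports Defs "Jordan_Normal_Form.DL_Rank_Submatrix" begin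

definition Bf :: "nat \<Rightarrow> 'k::field vec \<Rightarrow> 'k vec \<Rightarrow> 'k" where
  "Bf n x y = (\<Sum>i<n+1. x $ i * y $ (n + 1 + i) + y $ i * x $ (n + 1 + i))"

lemma B2_Bf:
  assumes "x \<in> carrier_vec (2*n+2)" "y \<in> carrier_vec (2*n+2)"
  shows "B2 n x y = Bf n x y"
proof -
  have "q2 n (x + y) = (\<Sum>i<n+1. (x$i + y$i) * (x $ (n+1+i) + y $ (n+1+i)))"
    unfolding q2_def using assms by (intro sum.cong) auto
  then show ?thesis unfolding B2_def Bf_def q2_def
    by (simp add: sum_subtractf[symmetric] algebra_simps)
qed


lemma Bf_sym: "Bf n x y = Bf n y x"
  unfolding Bf_def by (intro sum.cong) (auto simp: mult.commute)

lemma Bf_self: "Bf n x x = 2 * q2 n x"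
  unfolding Bf_def q2_def sum_distrib_left by (intro sum.cong) (auto simp: mult.commute)


lemma Bf_add:
  assumes "x \<in> carrier_vec (2*n+2)" "y \<in> carrier_vec (2*n+2)"
  shows "Bf n (x + y) w = Bf n x w + Bf n y w"
  unfolding Bf_def sum.distrib[symmetric] using assms by (intro sum.cong) (auto simp: algebra_simps)

lemma Bf_minus:
  assumes "x \<in> carrier_vec (2*n+2)" "y \<in> carrier_vec (2*n+2)"
  shows "Bf n (x - y) w = Bf n x w - Bf n y w"
  unfolding Bf_def sum_subtractf[symmetric] using assms by (intro sum.cong) (auto simp: algebra_simps)

lemma Bf_smult:
  assumes "x \<in> carrier_vec (2*n+2)"
  shows "Bf n (c \<cdot>\<^sub>v x) w = c * Bf n x w"
  unfolding Bf_def sum_distrib_left using assms by (intro sum.cong) (auto simp: algebra_simps)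

lemma q2_add:
  assumes "x \<in> carrier_vec (2*n+2)" "y \<in> carrier_vec (2*n+2)"
  shows "q2 n (x + y) = q2 n x + q2 n y + Bf n x y"
  using B2_Bf[OF assms] unfolding B2_def by (simp add: algebra_simps)

lemma q2_smult:
  assumes "x \<in> carrier_vec (2*n+2)"
  shows "q2 n (c \<cdot>\<^sub>v x) = c^2 * q2 n x"
  unfolding q2_def sum_distrib_left using assms by (intro sum.cong) (auto simp: algebra_simps power2_eq_square)

lemma q2_minus:
  assumes "x \<in> carrier_vec (2*n+2)" "y \<in> carrier_vec (2*n+2)"
  shows "q2 n (x - y) = q2 n x + q2 n y - Bf n x y"
  unfolding q2_def Bf_def sum_subtractf[symmetric] sum.distrib[symmetric] using assms
  by (intro sum.cong) (auto simp: algebra_simps)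


lemma sum_split2: "(\<Sum>j<2*n+2::nat. f j) = (\<Sum>i<n+1. f i) + (\<Sum>i<n+1. f (n+1+i))"
proof -
  have "(\<Sum>j<2*n+2. f j) = (\<Sum>j\<in>{0..<n+1}. f j) + (\<Sum>j\<in>{n+1..<2*n+2}. f j)"
  proof -
    have "(0::nat) \<le> n+1" "n+1 \<le> 2*n+2" by auto
    from sum.atLeastLessThan_concat[OF this, of f] show ?thesis by (simp only: lessThan_atLeast0)
  qed
  also have "(\<Sum>j\<in>{n+1..<2*n+2}. f j) = (\<Sum>j\<in>{0+(n+1)..<(n+1)+(n+1)}. f j)" by (rule arg_cong[where f="sum f"]) auto
  also have "\<dots> = (\<Sum>i\<in>{0..<n+1}. f (i + (n+1)))" by (rule sum.shift_bounds_nat_ivl)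
  finally show ?thesis by (simp add: lessThan_atLeast0 add.commute)
qed

definition sw :: "nat \<Rightarrow> nat \<Rightarrow> nat" where
  "sw n j = (if j < n+1 then j + (n+1) else j - (n+1))"

lemma sw_lt: "j < 2*n+2 \<Longrightarrow> sw n j < 2*n+2"
  unfolding sw_def by auto

lemma sum_sw: "(\<Sum>j<2*n+2. x $ j * w $ (sw n j)) = Bf n x w"
  unfolding sum_split2 Bf_def sum.distrib by (simp add: sw_def add.commute mult.commute)

definition refl :: "nat \<Rightarrow> 'k::field vec \<Rightarrow> 'k vec \<Rightarrow> 'k vec" where
  "refl n v x = x - (Bf n x v / q2 n v) \<cdot>\<^sub>v v"

lemma refl_carrier: "x \<in> carrier_vec (2*n+2) \<Longrightarrow> v \<in> carrier_vec (2*n+2) \<Longrightarrow> refl n v x \<in> carrier_vec (2*n+2)"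
  unfolding refl_def by auto

lemma q2_refl:
  assumes "x \<in> carrier_vec (2*n+2)" "v \<in> carrier_vec (2*n+2)" "q2 n v \<noteq> 0"
  shows "q2 n (refl n v x) = q2 n x"
proof -
  define t where "t = Bf n x v / q2 n v"
  have "q2 n (refl n v x) = q2 n x + t^2 * q2 n v - t * Bf n x v"
    unfolding refl_def t_def[symmetric] using assms
    by (simp add: q2_minus q2_smult Bf_sym[of n x] Bf_smult)
  also have "t^2 * q2 n v = t * Bf n x v" using assms(3) unfolding t_def by (simp add: power2_eq_square)
  finally show ?thesis by simp
qed

lemma Bf_refl:
  assumes "x \<in> carrier_vec (2*n+2)" "v \<in> carrier_vec (2*n+2)"
  shows "Bf n (refl n v x) w = Bf n x w - (Bf n x v / q2 n v) * Bf n v w"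
  unfolding refl_def using assms by (simp add: Bf_minus Bf_smult)


lemma det2: "A \<in> carrier_mat 2 2 \<Longrightarrow> det A = A$$(0,0)*A$$(1,1) - A$$(0,1)*A$$(1,0)"
  by (simp add: laplace_expansion_column[of A 2 0] cofactor_def det_single mat_delete_def numeral_2_eq_2 lessThan_Suc)

lemma pick2:
  assumes "(i1::nat) < i2"
  shows "pick {i1,i2} 0 = i1" "pick {i1,i2} (Suc 0) = i2"
proof -
  show a: "pick {i1,i2} 0 = i1" using assms unfolding pick.simps by (auto intro!: Least_equality)
  show "pick {i1,i2} (Suc 0) = i2" using assms unfolding pick.simps(2) a by (auto intro!: Least_equality)
qed

lemma rank_ge2:
  fixes A :: "'a::field mat"
  assumes A: "A \<in> carrier_mat m nc" and "i1 < i2" "i2 < m" "j1 < j2" "j2 < nc"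
    and d: "A$$(i1,j1)*A$$(i2,j2) - A$$(i1,j2)*A$$(i2,j1) \<noteq> 0"
  shows "2 \<le> vec_space.rank m A"
proof -
  have cI: "{i. i < dim_row A \<and> i \<in> {i1,i2}} = {i1,i2}" using assms by auto
  have cJ: "{j. j < dim_col A \<and> j \<in> {j1,j2}} = {j1,j2}" using assms by auto
  have cJ': "{j. j < nc \<and> j \<in> {j1,j2}} = {j1,j2}" using assms by auto
  have S: "submatrix A {i1,i2} {j1,j2} = mat 2 2 (\<lambda>(i,j). A $$ (pick {i1,i2} i, pick {j1,j2} j))"
    unfolding submatrix_def cI cJ using assms by (simp add: numeral_2_eq_2)
  have "det (submatrix A {i1,i2} {j1,j2}) = A$$(i1,j1)*A$$(i2,j2) - A$$(i1,j2)*A$$(i2,j1)"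
    unfolding S by (subst det2) (auto simp del: pick.simps simp: pick2[OF assms(2)] pick2[OF assms(4)])
  with d have "det (submatrix A {i1,i2} {j1,j2}) \<noteq> 0" by simp
  from vec_space.rank_gt_minor[OF A this] show ?thesis unfolding cJ' using assms by simp
qed

lemma rank_ge2':
  fixes A :: "'a::field mat"
  assumes A: "A \<in> carrier_mat m nc" and "i1 \<noteq> i2" "i1 < m" "i2 < m" "j1 \<noteq> j2" "j1 < nc" "j2 < nc"
    and d: "A$$(i1,j1)*A$$(i2,j2) - A$$(i1,j2)*A$$(i2,j1) \<noteq> 0"
  shows "2 \<le> vec_space.rank m A"
proof (cases "i1 < i2")
  case True
  show ?thesis
  proof (cases "j1 < j2")
    case True
    show ?thesis by (rule rank_ge2[OF A \<open>i1 < i2\<close> _ True]) (use assms in auto)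
  next
    case False
    then have "j2 < j1" using assms by auto
    show ?thesis by (rule rank_ge2[OF A \<open>i1 < i2\<close> _ \<open>j2 < j1\<close>]) (use assms in \<open>auto simp: algebra_simps\<close>)
  qed
next
  case False
  then have i: "i2 < i1" using assms by auto
  show ?thesis
  proof (cases "j1 < j2")
    case True
    show ?thesis by (rule rank_ge2[OF A i _ True]) (use assms in \<open>auto simp: algebra_simps\<close>)
  next
    case False
    then have "j2 < j1" using assms by auto
    show ?thesis by (rule rank_ge2[OF A i _ \<open>j2 < j1\<close>]) (use assms in \<open>auto simp: algebra_simps\<close>)
  qed
qed


definition Gm :: "nat \<Rightarrow> 'k::field vec \<Rightarrow> 'k vec \<Rightarrow> 'k mat" where
  "Gm n a b = mat (2*n+2) (2*n+2) (\<lambda>(i,j). (if i = j then 1 else 0) -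
     (a$i * a$(sw n j) * inverse (q2 n a) + b$i * b$(sw n j) * inverse (q2 n b)
      - b$i * a$(sw n j) * (Bf n a b * inverse (q2 n a) * inverse (q2 n b))))"

lemma Gm_carrier: "Gm n a b \<in> carrier_mat (2*n+2) (2*n+2)"
  unfolding Gm_def by simp

lemma Gm_mult:
  assumes a: "a \<in> carrier_vec (2*n+2)" and b: "b \<in> carrier_vec (2*n+2)" and x: "x \<in> carrier_vec (2*n+2)"
  shows "Gm n a b *\<^sub>v x = refl n b (refl n a x)"
proof (rule eq_vecI)
  show "dim_vec (Gm n a b *\<^sub>v x) = dim_vec (refl n b (refl n a x))"
    using a b x by (simp add: Gm_def refl_def)
  fix i assume "i < dim_vec (refl n b (refl n a x))"
  then have i: "i < 2*n+2" using a b x by (simp add: refl_def)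
  define ia where "ia = inverse (q2 n a)"
  define ib where "ib = inverse (q2 n b)"
  define k where "k = Bf n a b * ia * ib"
  have "(Gm n a b *\<^sub>v x) $ i = (\<Sum>j<2*n+2. ((if i = j then 1 else 0) -
     (a$i * a$(sw n j) * ia + b$i * b$(sw n j) * ib - b$i * a$(sw n j) * k)) * x $ j)"
    using i x by (simp add: Gm_def scalar_prod_def lessThan_atLeast0 ia_def ib_def k_def)
  also have "\<dots> = (\<Sum>j<2*n+2. (if i = j then x $ j else 0)) - a$i*ia*(\<Sum>j<2*n+2. x$j*a$(sw n j))
      - b$i*ib*(\<Sum>j<2*n+2. x$j*b$(sw n j)) + b$i*k*(\<Sum>j<2*n+2. x$j*a$(sw n j))"
    unfolding sum_distrib_left sum_subtractf[symmetric] sum.distrib[symmetric]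
    by (intro sum.cong) (auto simp: algebra_simps)
  also have "(\<Sum>j<2*n+2. (if i = j then x $ j else 0)) = x $ i" using i by simp
  finally have L: "(Gm n a b *\<^sub>v x) $ i = x $ i - a$i*ia*Bf n x a - b$i*ib*Bf n x b + b$i*k*Bf n x a"
    unfolding sum_sw .
  have R: "refl n b (refl n a x) $ i = x $ i - a$i*ia*Bf n x a - b$i*ib*Bf n x b + b$i*k*Bf n x a"
  proof -
    have r1: "refl n a x $ i = x$i - Bf n x a * ia * a$i" using i a x by (simp add: refl_def ia_def divide_inverse)
    have r2: "Bf n (refl n a x) b = Bf n x b - Bf n x a * ia * Bf n a b"
      unfolding Bf_refl[OF x a] by (simp add: ia_def divide_inverse)
    have "refl n b (refl n a x) $ i = refl n a x $ i - Bf n (refl n a x) b * ib * b$i"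
      using i b refl_carrier[OF x a] by (simp add: refl_def ib_def divide_inverse)
    then show ?thesis unfolding r1 r2 k_def by (simp add: algebra_simps)
  qed
  show "(Gm n a b *\<^sub>v x) $ i = refl n b (refl n a x) $ i" using L R by simp
qed


lemma sw_sw: "j < 2*n+2 \<Longrightarrow> sw n (sw n j) = j"
  unfolding sw_def by auto

lemma sw_inj: "j1 < 2*n+2 \<Longrightarrow> j2 < 2*n+2 \<Longrightarrow> sw n j1 = sw n j2 \<Longrightarrow> j1 = j2"
  by (metis sw_sw)

lemma Gm_rank:
  fixes a b :: "'k::field vec"
  assumes a: "a \<in> carrier_vec (2*n+2)" and b: "b \<in> carrier_vec (2*n+2)"
    and qa: "q2 n a \<noteq> 0" and qb: "q2 n b \<noteq> 0"
    and i: "i1 \<noteq> i2" "i1 < 2*n+2" "i2 < 2*n+2" and D: "a$i1 * b$i2 - a$i2 * b$i1 \<noteq> 0"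
  shows "vec_space.rank (2*n+2) (1\<^sub>m (2*n+2) - Gm n a b) = 2"
proof -
  define N where "N = 2*n+2"
  define ia where "ia = inverse (q2 n a)"
  define ib where "ib = inverse (q2 n b)"
  define k where "k = Bf n a b * ia * ib"
  define A1 where "A1 = mat N N (\<lambda>(i,j). a$i * (a$(sw n j)*ia))"
  define A2 where "A2 = mat N N (\<lambda>(i,j). b$i * (b$(sw n j)*ib - a$(sw n j)*k))"
  have M: "1\<^sub>m (2*n+2) - Gm n a b = A1 + A2"
    unfolding A1_def A2_def N_def
    by (rule eq_matI) (auto simp: Gm_def ia_def ib_def k_def algebra_simps)
  have A1c: "A1 \<in> carrier_mat N N" and A2c: "A2 \<in> carrier_mat N N" unfolding A1_def A2_def by auto
  have r1: "vec_space.rank N A1 \<le> 1"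
    by (rule vec_space.rank_le_1_product_entries[OF A1c, of "\<lambda>i. a$i" "\<lambda>j. a$(sw n j)*ia"])
      (auto simp: A1_def)
  have r2: "vec_space.rank N A2 \<le> 1"
    by (rule vec_space.rank_le_1_product_entries[OF A2c, of "\<lambda>i. b$i" "\<lambda>j. b$(sw n j)*ib - a$(sw n j)*k"])
      (auto simp: A2_def)
  have up: "vec_space.rank N (A1 + A2) \<le> 2"
    using vec_space.rank_subadditive[OF A1c A2c] r1 r2 by simp
  have ent: "(A1 + A2) $$ (i, sw n j) = a$i * (a$j*ia) + b$i * (b$j*ib - a$j*k)" if "i < N" "j < N" for i j
    using that sw_lt[of j n] sw_sw[of j n] unfolding A1_def A2_def N_def by simp
  have minor: "(a$i1 * (a$i1*ia) + b$i1 * (b$i1*ib - a$i1*k)) * (a$i2 * (a$i2*ia) + b$i2 * (b$i2*ib - a$i2*k))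
     - (a$i1 * (a$i2*ia) + b$i1 * (b$i2*ib - a$i2*k)) * (a$i2 * (a$i1*ia) + b$i2 * (b$i1*ib - a$i1*k))
     = (a$i1 * b$i2 - a$i2 * b$i1)^2 * ia * ib"
    by (simp add: algebra_simps power2_eq_square)
  have "ia \<noteq> 0" "ib \<noteq> 0" using qa qb by (auto simp: ia_def ib_def)
  then have nz: "(a$i1 * b$i2 - a$i2 * b$i1)^2 * ia * ib \<noteq> 0" using D by simp
  have iN: "i1 < N" "i2 < N" using i by (auto simp: N_def)
  have m: "(A1 + A2) $$ (i1, sw n i1) * (A1 + A2) $$ (i2, sw n i2) - (A1 + A2) $$ (i1, sw n i2) * (A1 + A2) $$ (i2, sw n i1) \<noteq> 0"
    unfolding ent[OF iN(1) iN(1)] ent[OF iN(1) iN(2)] ent[OF iN(2) iN(1)] ent[OF iN(2) iN(2)] minor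
    by (rule nz)
  have low: "2 \<le> vec_space.rank N (A1 + A2)"
    by (rule rank_ge2'[OF _ _ _ _ _ _ _ m])
      (use A1c A2c i sw_lt[of i1 n] sw_lt[of i2 n] sw_inj[of i1 n i2] in \<open>auto simp: N_def\<close>)
  show ?thesis using up low M unfolding N_def by simp
qed


lemma exists_nonroot2:
  fixes P P' :: "'k::alg_closed_field poly"
  assumes "P \<noteq> 0" "P' \<noteq> 0"
  shows "\<exists>c. poly P c \<noteq> 0 \<and> poly P' c \<noteq> 0"
proof -
  define R where "R = P * P'"
  have R0: "R \<noteq> 0" using assms by (simp add: R_def)
  show ?thesis
  proof (cases "degree R = 0")
    case True
    then obtain r where "R = [:r:]" by (metis degree_eq_zeroE)
    then have "poly R 0 \<noteq> 0" using R0 by simp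
    then show ?thesis unfolding R_def by auto
  next
    case False
    have "degree (R + [:-1:]) = degree R" using False by (intro degree_add_eq_left) simp
    then have "degree (R + [:-1:]) > 0" using False by simp
    from alg_closed_imp_poly_has_root[OF this] obtain c where "poly (R + [:-1:]) c = 0" by blast
    then have "poly R c = 1" by simp
    then show ?thesis unfolding R_def by (intro exI[of _ c]) auto
  qed
qed

definition v4 :: "nat \<Rightarrow> 'k::field \<Rightarrow> 'k \<Rightarrow> 'k \<Rightarrow> 'k \<Rightarrow> 'k vec" where
  "v4 n p0 pn pn1 p2n1 = vec (2*n+2) (\<lambda>j. if j = 0 then p0 else if j = n then pn else
      if j = n+1 then pn1 else if j = 2*n+1 then p2n1 else 0)"

lemma v4_carrier: "v4 n p0 pn pn1 p2n1 \<in> carrier_vec (2*n+2)"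
  unfolding v4_def by simp

lemma sum_0n:
  assumes "(n::nat) \<ge> 1" "\<And>i. i < n+1 \<Longrightarrow> i \<noteq> 0 \<Longrightarrow> i \<noteq> n \<Longrightarrow> f i = 0"
  shows "(\<Sum>i<n+1. f i) = f 0 + (f n :: 'a::comm_monoid_add)"
proof -
  have "(\<Sum>i<n+1. f i) = (\<Sum>i\<in>{0,n}. f i)"
    by (rule sum.mono_neutral_right) (use assms in auto)
  also have "\<dots> = f 0 + f n" using assms by simp
  finally show ?thesis .
qed

lemma Bf_v4:
  assumes "n \<ge> 1"
  shows "Bf n y (v4 n p0 pn pn1 p2n1) = y$0 * pn1 + p0 * y$(n+1) + y$n * p2n1 + pn * y$(2*n+1)"
proof -
  have "Bf n y (v4 n p0 pn pn1 p2n1) = (y$0 * pn1 + p0 * y$(n+1)) + (y$n * p2n1 + pn * y$(2*n+1))"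
    unfolding Bf_def by (subst sum_0n) (use assms in \<open>auto simp: v4_def mult_2\<close>)
  then show ?thesis by (simp add: algebra_simps)
qed

lemma q2_v4:
  assumes "n \<ge> 1"
  shows "q2 n (v4 n p0 pn pn1 p2n1) = p0 * pn1 + pn * p2n1"
  unfolding q2_def by (subst sum_0n) (use assms in \<open>auto simp: v4_def mult_2\<close>)

lemma t2_v4:
  assumes "n \<ge> 1"
  shows "t2 n (v4 n p0 pn pn1 p2n1) = pn + p2n1"
  unfolding t2_def using assms by (auto simp: v4_def)

lemma exists_z:
  fixes y y' :: "'k::alg_closed_field vec"
  assumes n: "n \<ge> 1" and ty: "t2 n y = 1" and ty': "t2 n y' = 1"
  shows "\<exists>z \<in> Q_points n. Bf n y z \<noteq> 0 \<and> Bf n y' z \<noteq> 0"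
proof -
  have Qv4: "v4 n p0 pn pn1 p2n1 \<in> Q_points n" if "p0 * pn1 + pn * p2n1 = 0" "pn + p2n1 = 1" for p0 pn pn1 p2n1 :: 'k
    unfolding Q_points_def using that v4_carrier[of n p0 pn pn1 p2n1] q2_v4[OF n, of p0 pn pn1 p2n1] t2_v4[OF n, of p0 pn pn1 p2n1] by simp
  have ty0: "y$n + y$(2*n+1) = 1" "y'$n + y'$(2*n+1) = 1" using ty ty' by (auto simp: t2_def)
  show ?thesis
  proof (cases "y$(2*n+1) \<noteq> 0 \<and> y'$(2*n+1) \<noteq> 0")
    case True
    show ?thesis by (rule bexI[of _ "v4 n 0 1 0 0"]) (use True Qv4 in \<open>auto simp: Bf_v4[OF n]\<close>)
  next
    case F1: False
    show ?thesis
    proof (cases "y$n \<noteq> 0 \<and> y'$n \<noteq> 0")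
      case True
      show ?thesis by (rule bexI[of _ "v4 n 0 0 0 1"]) (use True Qv4 in \<open>auto simp: Bf_v4[OF n]\<close>)
    next
      case F2: False
      have sp: "y$(2*n+1) - y$n \<noteq> 0" "y'$(2*n+1) - y'$n \<noteq> 0"
        using F1 F2 ty0 by (auto simp: algebra_simps)
      define P where "P = [: y$(n+1) + y$n, y$(2*n+1) - y$n - y$0, y$0 :]"
      define P' where "P' = [: y'$(n+1) + y'$n, y'$(2*n+1) - y'$n - y'$0, y'$0 :]"
      have "P \<noteq> 0" using sp unfolding P_def by auto
      moreover have "P' \<noteq> 0" using sp unfolding P'_def by auto
      ultimately obtain c where c: "poly P c \<noteq> 0" "poly P' c \<noteq> 0" using exists_nonroot2 by blast
      have e: "Bf n w (v4 n 1 c (-(c*(1-c))) (1-c)) = poly [: w$(n+1) + w$n, w$(2*n+1) - w$n - w$0, w$0 :] c" for w :: "'k vec"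
        by (simp add: Bf_v4[OF n] algebra_simps)
      show ?thesis
        by (rule bexI[of _ "v4 n 1 c (-(c*(1-c))) (1-c)"]) (use c Qv4 in \<open>auto simp: e P_def P'_def\<close>)
    qed
  qed
qed


lemma one_v4: "n \<ge> 1 \<Longrightarrow> one_vec n = v4 n 0 1 0 1"
  unfolding one_vec_def v4_def by (rule eq_vecI) auto

lemma Bf_one: "n \<ge> 1 \<Longrightarrow> Bf n y (one_vec n) = t2 n y"
  unfolding one_v4 t2_def by (simp add: Bf_v4)

lemma one_carrier: "one_vec n \<in> carrier_vec (2*n+2)"
  unfolding one_vec_def by simp

lemma minor_exists:
  fixes a b :: "'k::field vec"
  assumes a: "a \<in> carrier_vec (2*n+2)" and b: "b \<in> carrier_vec (2*n+2)"
    and qa: "q2 n a \<noteq> 0" and np: "\<not> (\<exists>c. b = c \<cdot>\<^sub>v a)"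
  shows "\<exists>i1 i2. i1 \<noteq> i2 \<and> i1 < 2*n+2 \<and> i2 < 2*n+2 \<and> a$i1 * b$i2 - a$i2 * b$i1 \<noteq> 0"
proof -
  have "\<exists>i<2*n+2. a$i \<noteq> 0"
  proof (rule ccontr)
    assume "\<not> ?thesis"
    then have "q2 n a = 0" unfolding q2_def by (intro sum.neutral) auto
    with qa show False by simp
  qed
  then obtain i where i: "i < 2*n+2" "a$i \<noteq> 0" by blast
  show ?thesis
  proof (rule ccontr)
    assume H: "\<not> ?thesis"
    have H': "a$i1 * b$i2 - a$i2 * b$i1 = 0" if "i1 \<noteq> i2" "i1 < 2*n+2" "i2 < 2*n+2" for i1 i2
      using H that by blast
    have "b = (b$i / a$i) \<cdot>\<^sub>v a"
    proof (rule eq_vecI)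
      show "dim_vec b = dim_vec ((b$i / a$i) \<cdot>\<^sub>v a)" using a b by simp
      fix j assume "j < dim_vec ((b$i / a$i) \<cdot>\<^sub>v a)"
      then have j: "j < 2*n+2" using a by simp
      show "b$j = ((b$i / a$i) \<cdot>\<^sub>v a) $ j"
      proof (cases "j = i")
        case True then show ?thesis using i a by simp
      next
        case False
        then have e: "a$i * b$j = a$j * b$i" using H'[of i j] i j by simp
        have "b$j = b$i / a$i * a$j"
        proof -
          have "b$j = (a$i * b$j) / a$i" using i by simp
          also have "\<dots> = b$i / a$i * a$j" unfolding e by simp
          finally show ?thesis .
        qed
        then show ?thesis using a j by simp
      qed
    qed
    with np show False by blast
  qed
qed

lemma stab_one_mem:
  fixes h :: "'k::field mat"
  assumes h: "h \<in> carrier_mat (2*n+2) (2*n+2)"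
    and O: "\<And>x. x \<in> carrier_vec (2*n+2) \<Longrightarrow> q2 n (h *\<^sub>v x) = q2 n x"
    and r: "vec_space.rank (2*n+2) (1\<^sub>m (2*n+2) - h) mod 2 = 0"
    and one: "h *\<^sub>v one_vec n = one_vec n"
  shows "h \<in> Stab_one n"
proof -
  have "h \<in> SO_points n" unfolding SO_points_def O_points_def dickson_def using h O r by auto
  moreover have "h = 1 \<cdot>\<^sub>m h" by (rule eq_matI) auto
  ultimately have "h \<in> GSO_points n" unfolding GSO_points_def by force
  then show ?thesis unfolding Stab_one_def using one by simp
qed

lemma refl_self_eq:
  assumes "x \<in> carrier_vec (2*n+2)" "v \<in> carrier_vec (2*n+2)" "Bf n x v = q2 n v" "q2 n v \<noteq> 0"
  shows "refl n v x = x - v"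
  unfolding refl_def using assms by (intro eq_vecI) auto

theorem proposition2p12:
  fixes n :: nat
  assumes "CHAR('k::alg_closed_field) > 0"
    and "n \<ge> 1"
  shows "\<forall>y \<in> (Q_points n :: 'k vec set). \<forall>y' \<in> Q_points n.
           \<exists>h \<in> Stab_one n. h *\<^sub>v y = y'"
proof (intro ballI)
  fix y y' :: "'k vec"
  assume yQ: "y \<in> Q_points n" and y'Q: "y' \<in> Q_points n"
  have n: "n \<ge> 1" by (rule assms(2))
  have y: "y \<in> carrier_vec (2*n+2)" "q2 n y = 0" "t2 n y = 1" using yQ unfolding Q_points_def by auto
  have y': "y' \<in> carrier_vec (2*n+2)" "q2 n y' = 0" "t2 n y' = 1" using y'Q unfolding Q_points_def by auto
  show "\<exists>h \<in> Stab_one n. h *\<^sub>v y = y'"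
  proof (cases "y = y'")
    case True
    have z0: "1\<^sub>m (2*n+2) - 1\<^sub>m (2*n+2) = (0\<^sub>m (2*n+2) (2*n+2) :: 'k mat)" by (rule eq_matI) auto
    have rk0: "vec_space.rank (2*n+2) (1\<^sub>m (2*n+2) - 1\<^sub>m (2*n+2) :: 'k mat) mod 2 = 0"
      unfolding z0 vec_space.rank_0I by simp
    have o1: "1\<^sub>m (2*n+2) *\<^sub>v one_vec n = (one_vec n :: 'k vec)" by (rule one_mult_mat_vec[OF one_carrier])
    have oq: "q2 n (1\<^sub>m (2*n+2) *\<^sub>v x) = q2 n x" if "x \<in> carrier_vec (2*n+2)" for x :: "'k vec"
      by (subst one_mult_mat_vec[OF that]) (rule refl)
    have "(1\<^sub>m (2*n+2) :: 'k mat) \<in> Stab_one n"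
      by (rule stab_one_mem[OF one_carrier_mat oq rk0 o1])
    then show ?thesis using True y by (intro bexI[of _ "1\<^sub>m (2*n+2)"]) auto
  next
    case False
    obtain z where zQ: "z \<in> Q_points n" and P: "Bf n y z \<noteq> 0" and R: "Bf n y' z \<noteq> 0"
      using exists_z[OF n y(3) y'(3)] by blast
    have z: "z \<in> carrier_vec (2*n+2)" "q2 n z = 0" "t2 n z = 1" using zQ unfolding Q_points_def by auto
    define a where "a = y - z"
    define b where "b = z - y'"
    have ac: "a \<in> carrier_vec (2*n+2)" and bc: "b \<in> carrier_vec (2*n+2)" using y z y' by (auto simp: a_def b_def)
    have qa: "q2 n a = - Bf n y z" unfolding a_def using y z by (simp add: q2_minus)
    have qb: "q2 n b = - Bf n y' z" unfolding b_def using y' z by (simp add: q2_minus Bf_sym)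
    have qa0: "q2 n a \<noteq> 0" and qb0: "q2 n b \<noteq> 0" using qa qb P R by auto
    have Baz: "Bf n a z = Bf n y z" unfolding a_def using y z by (simp add: Bf_minus Bf_self)
    have Bbz: "Bf n b z = - Bf n y' z" unfolding b_def using y' z by (simp add: Bf_minus Bf_self)
    have np: "\<not> (\<exists>c. b = c \<cdot>\<^sub>v a)"
    proof
      assume "\<exists>c. b = c \<cdot>\<^sub>v a"
      then obtain c where c: "b = c \<cdot>\<^sub>v a" by blast
      have e1: "- Bf n y' z = c * Bf n y z" using Bbz Baz c Bf_smult[OF ac, of c z] by simp
      have e2: "- Bf n y' z = c^2 * (- Bf n y z)" using qa qb c q2_smult[OF ac, of c] by simp
      have e3: "c * Bf n y z = - (c^2 * Bf n y z)" using e1 e2 by simp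
      have "c * (c + 1) * Bf n y z = c * Bf n y z + c^2 * Bf n y z" by (simp add: algebra_simps power2_eq_square)
      also have "\<dots> = 0" unfolding e3 by simp
      finally have "c * (c + 1) * Bf n y z = 0" .
      then have "c = 0 \<or> c + 1 = 0" using P by simp
      then have "c = 0 \<or> c = -1" by (auto simp: add_eq_0_iff2)
      moreover have "c \<noteq> 0" using e1 R by auto
      ultimately have cm: "c = -1" by simp
      have "y = y'"
      proof (rule eq_vecI)
        show "dim_vec y = dim_vec y'" using y y' by simp
        fix j assume "j < dim_vec y'"
        then have j: "j < 2*n+2" using y' by simp
        have "b $ j = (c \<cdot>\<^sub>v a) $ j" using c by simp
        then show "y $ j = y' $ j" using j y y' z cm by (simp add: a_def b_def)
      qed
      with False show False by simp
    qed
    obtain i1 i2 where ii: "i1 \<noteq> i2" "i1 < 2*n+2" "i2 < 2*n+2" "a$i1 * b$i2 - a$i2 * b$i1 \<noteq> 0"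
      using minor_exists[OF ac bc qa0 np] by blast
    have rk: "vec_space.rank (2*n+2) (1\<^sub>m (2*n+2) - Gm n a b) = 2"
      by (rule Gm_rank[OF ac bc qa0 qb0 ii])
    have Ba1: "Bf n (one_vec n) a = 0" unfolding Bf_sym[of n "one_vec n"] a_def unfolding Bf_minus[OF y(1) z(1)] unfolding Bf_one[OF n]
      using y z by simp
    have Bb1: "Bf n (one_vec n) b = 0" unfolding Bf_sym[of n "one_vec n"] b_def unfolding Bf_minus[OF z(1) y'(1)] unfolding Bf_one[OF n]
      using y' z by simp
    have r1: "refl n v (one_vec n) = one_vec n" if "Bf n (one_vec n) v = 0" "v \<in> carrier_vec (2*n+2)" for v
      unfolding refl_def using that by (intro eq_vecI) (auto simp: one_vec_def)
    have G1: "Gm n a b *\<^sub>v one_vec n = one_vec n"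
      using Gm_mult[OF ac bc one_carrier] r1[OF Ba1 ac] r1[OF Bb1 bc] by simp
    have Gq: "q2 n (Gm n a b *\<^sub>v x) = q2 n x" if "x \<in> carrier_vec (2*n+2)" for x
      unfolding Gm_mult[OF ac bc that] q2_refl[OF refl_carrier[OF that ac] bc qb0] q2_refl[OF that ac qa0] ..
    have ra: "refl n a y = z"
    proof -
      have "Bf n y a = Bf n a y" by (rule Bf_sym)
      also have "\<dots> = Bf n y y - Bf n z y" unfolding a_def by (rule Bf_minus[OF y(1) z(1)])
      also have "\<dots> = - Bf n y z" using y by (simp add: Bf_self Bf_sym[of n z y])
      also have "\<dots> = q2 n a" using qa by simp
      finally have "Bf n y a = q2 n a" .
      then have "refl n a y = y - a" using refl_self_eq[OF y(1) ac _ qa0] by simp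
      then show ?thesis unfolding a_def using y z by (intro eq_vecI) auto
    qed
    have rb: "refl n b z = y'"
    proof -
      have "Bf n z b = q2 n b" using qb Bbz by (simp add: Bf_sym[of n z b])
      then have "refl n b z = z - b" using refl_self_eq[OF z(1) bc _ qb0] by simp
      then show ?thesis unfolding b_def using y' z by (intro eq_vecI) auto
    qed
    have "Gm n a b \<in> Stab_one n"
      by (rule stab_one_mem[OF Gm_carrier Gq]) (use rk G1 in auto)
    moreover have "Gm n a b *\<^sub>v y = y'" using Gm_mult[OF ac bc y(1)] ra rb by simp
    ultimately show ?thesis by blast
  qed
qed

end
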